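(* Let $V\subset\mathbb{R}^d$ be a finite non-degenerate antichain and $k\ge 0$. A generated point $p\in S_V$ is a characteristic point of rank $k$ if and only if there is a partition $D_p=P_1\cup\dots\cup P_{k+1}$ into nonempty parts such that a subset $G\subseteq D_p$ is a minimal generating set for $p$ if and only if $|G\cap P_i|=1$ for all $i=1,\dots,k+1$. Moreover, in this case two minima $u,w\in D_p$ lie in the same part iff $T_p(u)=T_p(w)$.
   Context: For $x,y\in\mathbb{R}^d$, $x\le y$ (dominance order) means $x_i\le y_i$ for all $i$; $y\rhd x$ means $y_i>x_i$ for all $i$; $y\rhd_i x$ means $y_i=x_i$ and $y_j>x_j$ for all $j\neq i$. The join is the componentwise maximum. $V\subset\mathbb{R}^d$ is a finite antichain in the dominance order (elements are called minima). The orthogonal surface $S_V$ is the topological boundary of $\langle V\rangle=\{x: x\ge v\text{ for some }v\in V\}$; equivalently $p\in S_V$ iff there is $v\in V$ with $v\le p$ and no $w\in V$ with $p\rhd w$. For $p\in S_V$, $D_p=\{v\in V:v\le p\}$ and for $v\in D_p$, $T_p(v)=\{i: p_i=v_i\}$. A generated point is a point $p\in S_V$ equal to $\bigvee G$ for some nonempty $G\subseteq V$; such $G$ is a generating set for $p$, minimal if $\bigvee(G\setminus\{v\})\neq p$ for every $v\in G$. Flats: $U_i(v)=\{p\in S_V: p\rhd_i v\}$; for $v,w\in V$ put $v\sim_i w$ iff $U_i(v)\cap U_i(w)\neq\emptyset$, and let $\sim_i^c$ be the reflexive–transitive closure; the $i$-flat of $v$ is $F_i(v)=\overline{\bigcup_{w\sim_i^c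 v}U_i(w)}$, and an $i$-flat is any set of this form. A characteristic point is a point of $S_V$ that lies in some $i$-flat for every $i\in\{1,\dots,d\}$. $V$ is degenerate if there exist a characteristic point $p$, minima $x,u,v\in D_p$ and coordinates $i\neq j$ with $u_i<v_i=x_i=p_i$ and $v_j<u_j=x_j=p_j$; otherwise non-degenerate. For non-degenerate $V$ all minimal generating sets of a characteristic point have the same cardinality, and the rank of a characteristic point is this cardinality minus one. *)

theory Defs
  imports "HOL-Analysis.Analysis"
begin

definition dom_le :: "real^'d \<Rightarrow> real^'d \<Rightarrow> bool" where
  "dom_le x y \<longleftrightarrow> (\<forall>i. x$i \<le> y$i)"

definition sdom :: "real^'d \<Rightarrow> real^'d \<Rightarrow> bool" where
  "sdom y x \<longleftrightarrow> (\<forall>i. y$i > x$i)"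

definition sdom_i :: "'d \<Rightarrow> real^'d \<Rightarrow> real^'d \<Rightarrow> bool" where
  "sdom_i i y x \<longleftrightarrow> y$i = x$i \<and> (\<forall>j. j \<noteq> i \<longrightarrow> y$j > x$j)"

definition join :: "(real^'d) set \<Rightarrow> real^'d" where
  "join G = (\<chi> i. Max ((\<lambda>v. v$i) ` G))"

definition antichain :: "(real^'d) set \<Rightarrow> bool" where
  "antichain V \<longleftrightarrow> finite V \<and> (\<forall>v\<in>V. \<forall>w\<in>V. dom_le v w \<longrightarrow> v = w)"

definition surface :: "(real^'d) set \<Rightarrow> (real^'d) set" where
  "surface V = {p. (\<exists>v\<in>V. dom_le v p) \<and> \<not> (\<exists>w\<in>V. sdom p w)}"

definition Dset :: "(real^'d) set \<Rightarrow> real^'d \<Rightarrow> (real^'d) set" where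
  "Dset V p = {v\<in>V. dom_le v p}"

definition Tset :: "real^'d \<Rightarrow> real^'d \<Rightarrow> 'd set" where
  "Tset p v = {i. p$i = v$i}"

definition gen_set :: "(real^'d) set \<Rightarrow> real^'d \<Rightarrow> (real^'d) set \<Rightarrow> bool" where
  "gen_set V p G \<longleftrightarrow> G \<noteq> {} \<and> G \<subseteq> V \<and> join G = p"

text \<open>Minimal generating set; removing the only element leaves the empty set, whose join is
  not considered to be p.\<close>
definition min_gen_set :: "(real^'d) set \<Rightarrow> real^'d \<Rightarrow> (real^'d) set \<Rightarrow> bool" where
  "min_gen_set V p G \<longleftrightarrow> gen_set V p G \<and>
     (\<forall>v\<in>G. G - {v} = {} \<or> join (G - {v}) \<noteq> p)"

definition generated_point :: "(real^'d) set \<Rightarrow> real^'d \<Rightarrow> bool" where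
  "generated_point V p \<longleftrightarrow> p \<in> surface V \<and> (\<exists>G. gen_set V p G)"

definition Uflat :: "(real^'d) set \<Rightarrow> 'd \<Rightarrow> real^'d \<Rightarrow> (real^'d) set" where
  "Uflat V i v = {p \<in> surface V. sdom_i i p v}"

definition sim_i :: "(real^'d) set \<Rightarrow> 'd \<Rightarrow> real^'d \<Rightarrow> real^'d \<Rightarrow> bool" where
  "sim_i V i v w \<longleftrightarrow> v \<in> V \<and> w \<in> V \<and> Uflat V i v \<inter> Uflat V i w \<noteq> {}"

definition flat :: "(real^'d) set \<Rightarrow> 'd \<Rightarrow> real^'d \<Rightarrow> (real^'d) set" where
  "flat V i v = closure (\<Union> {Uflat V i w | w. (sim_i V i)\<^sup>*\<^sup>* v w})"

definition characteristic :: "(real^'d) set \<Rightarrow> real^'d \<Rightarrow> bool" where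
  "characteristic V p \<longleftrightarrow> p \<in> surface V \<and> (\<forall>i. \<exists>v\<in>V. p \<in> flat V i v)"

definition degenerate :: "(real^'d) set \<Rightarrow> bool" where
  "degenerate V \<longleftrightarrow> (\<exists>p x u v i j. characteristic V p \<and>
      x \<in> Dset V p \<and> u \<in> Dset V p \<and> v \<in> Dset V p \<and> i \<noteq> j \<and>
      u$i < v$i \<and> v$i = x$i \<and> x$i = p$i \<and>
      v$j < u$j \<and> u$j = x$j \<and> x$j = p$j)"

definition rank :: "(real^'d) set \<Rightarrow> real^'d \<Rightarrow> nat" where
  "rank V p = card (SOME G. min_gen_set V p G) - 1"

end

theory Submission
  imports Defs
begin


definition cov :: "real^'d \<Rightarrow> (real^'d) set \<Rightarrow> bool" where
  "cov p G \<longleftrightarrow> (\<forall>j. \<exists>g\<in>G. g$j = p$j)"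

definition mg :: "(real^'d) set \<Rightarrow> real^'d \<Rightarrow> (real^'d) set \<Rightarrow> bool" where
  "mg V p G \<longleftrightarrow> G \<subseteq> Dset V p \<and> cov p G \<and> (\<forall>v\<in>G. \<not> cov p (G - {v}))"

lemma cov_nonempty: "cov p G \<Longrightarrow> G \<noteq> {}"
  unfolding cov_def by auto

lemma cov_mono: "cov p G \<Longrightarrow> G \<subseteq> H \<Longrightarrow> cov p H"
  unfolding cov_def by blast

lemma join_iff:
  assumes "finite V" "G \<subseteq> V" "G \<noteq> {}"
  shows "join G = p \<longleftrightarrow> (G \<subseteq> Dset V p \<and> cov p G)"
proof -
  have fG: "finite G" using assms finite_subset by blast
  have comp: "join G $ j = Max ((\<lambda>v. v$j) ` G)" for j by (simp add: join_def)
  show ?thesis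
  proof
    assume J: "join G = p"
    have "g$j \<le> p$j" if "g \<in> G" for g j
      using comp[of j] J fG that by (metis Max_ge finite_imageI image_eqI)
    moreover have "\<exists>g\<in>G. g$j = p$j" for j
    proof -
      have "Max ((\<lambda>v. v$j) ` G) \<in> (\<lambda>v. v$j) ` G" using fG assms(3) by (intro Max_in) auto
      then show ?thesis using comp[of j] J by force
    qed
    ultimately show "G \<subseteq> Dset V p \<and> cov p G" using assms(2)
      unfolding Dset_def dom_le_def cov_def by auto
  next
    assume H: "G \<subseteq> Dset V p \<and> cov p G"
    show "join G = p"
    proof (subst vec_eq_iff, intro allI)
      fix j
      obtain g where g: "g \<in> G" "g$j = p$j" using H unfolding cov_def by blast
      have "Max ((\<lambda>v. v$j) ` G) = p$j"
        apply (rule Max_eqI)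
        using fG apply simp
        using H unfolding Dset_def dom_le_def apply auto[1]
        using g by (metis image_eqI)
      then show "join G $ j = p $ j" using comp by simp
    qed
  qed
qed

lemma min_gen_iff:
  assumes "finite V"
  shows "min_gen_set V p G \<longleftrightarrow> mg V p G"
proof
  assume A: "min_gen_set V p G"
  then have G: "G \<noteq> {}" "G \<subseteq> V" "join G = p" unfolding min_gen_set_def gen_set_def by auto
  then have H: "G \<subseteq> Dset V p" "cov p G" using join_iff[OF assms] by auto
  have "\<not> cov p (G - {v})" if "v \<in> G" for v
  proof
    assume c: "cov p (G - {v})"
    then have "G - {v} \<noteq> {}" by (rule cov_nonempty)
    moreover have "G - {v} \<subseteq> V" using G by auto
    moreover have "G - {v} \<subseteq> Dset V p" using H by auto
    ultimately have "join (G - {v}) = p" using join_iff[OF assms, of "G - {v}" p] c by blast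
    then show False using A that \<open>G - {v} \<noteq> {}\<close> unfolding min_gen_set_def by auto
  qed
  then show "mg V p G" using H unfolding mg_def by auto
next
  assume A: "mg V p G"
  then have H: "G \<subseteq> Dset V p" "cov p G" "G \<noteq> {}" unfolding mg_def using cov_nonempty by auto
  have GV: "G \<subseteq> V" using H unfolding Dset_def by auto
  have J: "join G = p" using join_iff[OF assms GV H(3)] H by auto
  have "G - {v} = {} \<or> join (G - {v}) \<noteq> p" if "v \<in> G" for v
  proof (rule ccontr)
    assume "\<not> ?thesis"
    then have "G - {v} \<noteq> {}" "join (G - {v}) = p" by auto
    then have "cov p (G - {v})" using join_iff[OF assms, of "G - {v}"] GV by auto
    then show False using A that unfolding mg_def by auto
  qed
  then show "min_gen_set V p G" unfolding min_gen_set_def gen_set_def using H GV J by auto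
qed



lemma suff:
  fixes V :: "(real^'d) set"
  assumes fin: "finite V" and v: "v \<in> Dset V p" and iv: "i \<in> Tset p v"
    and C: "\<forall>w\<in>Dset V p. Tset p w \<subseteq> Tset p v \<longrightarrow> i \<in> Tset p w"
  shows "p \<in> closure (Uflat V i v)"
proof -
  define s :: "real^'d" where "s = (\<chi> j. if j = i then 0 else if j \<in> Tset p v then 1 else -1)"
  define f where "f = (\<lambda>\<eta>::real. p + \<eta> *\<^sub>R s)"
  have fc: "f \<eta> $ j = p$j + \<eta> * s$j" for \<eta> j unfolding f_def by simp
  have vp: "v$j \<le> p$j" for j using v unfolding Dset_def dom_le_def by auto
  have vV: "v \<in> V" using v unfolding Dset_def by auto
  have ev1: "eventually (\<lambda>\<eta>. 0 < \<eta>) (at_right (0::real))" by (rule eventually_at_right_less)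
  have evc: "eventually (\<lambda>\<eta>. \<eta> < c) (at_right (0::real))" if "c > 0" for c
    using eventually_at_right_real[OF that] by (rule eventually_mono) auto
  have ev2: "eventually (\<lambda>\<eta>. \<forall>j. j \<notin> Tset p v \<longrightarrow> \<eta> < p$j - v$j) (at_right 0)"
  proof (rule eventually_all_finite)
    fix j
    show "eventually (\<lambda>\<eta>. j \<notin> Tset p v \<longrightarrow> \<eta> < p$j - v$j) (at_right 0)"
    proof (cases "j \<in> Tset p v")
      case False
      then have "p$j - v$j > 0" using vp[of j] unfolding Tset_def by auto
      then show ?thesis using evc[of "p$j - v$j"] by (rule_tac eventually_mono) auto
    qed auto
  qed
  have ev3: "eventually (\<lambda>\<eta>. \<forall>w\<in>V. \<forall>l. p$l < w$l \<longrightarrow> \<eta> < w$l - p$l) (at_right 0)"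
  proof (rule eventually_ball_finite[OF fin], intro ballI)
    fix w assume "w \<in> V"
    show "eventually (\<lambda>\<eta>. \<forall>l. p$l < w$l \<longrightarrow> \<eta> < w$l - p$l) (at_right 0)"
    proof (rule eventually_all_finite)
      fix l
      show "eventually (\<lambda>\<eta>. p$l < w$l \<longrightarrow> \<eta> < w$l - p$l) (at_right 0)"
      proof (cases "p$l < w$l")
        case True
        then show ?thesis using evc[of "w$l - p$l"] by (rule_tac eventually_mono) auto
      qed auto
    qed
  qed
  have inU: "f \<eta> \<in> Uflat V i v"
    if e0: "0 < \<eta>" and e2: "\<forall>j. j \<notin> Tset p v \<longrightarrow> \<eta> < p$j - v$j"
      and e3: "\<forall>w\<in>V. \<forall>l. p$l < w$l \<longrightarrow> \<eta> < w$l - p$l" for \<eta>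
  proof -
    have sd: "sdom_i i (f \<eta>) v"
      unfolding sdom_i_def
    proof (intro conjI allI impI)
      show "f \<eta> $ i = v $ i" using iv unfolding fc s_def Tset_def by simp
      fix j assume "j \<noteq> i"
      show "v$j < f \<eta> $ j"
      proof (cases "j \<in> Tset p v")
        case True then show ?thesis using \<open>j \<noteq> i\<close> e0 unfolding fc s_def Tset_def by simp
      next
        case False then have "\<eta> < p$j - v$j" using e2 by blast
        then show ?thesis using \<open>j \<noteq> i\<close> False unfolding fc s_def by simp
      qed
    qed
    have dl: "dom_le v (f \<eta>)" using sd unfolding sdom_i_def dom_le_def
      by (metis less_eq_real_def)
    have nd: "\<not> sdom (f \<eta>) w" if wV: "w \<in> V" for w
    proof
      assume sw: "sdom (f \<eta>) w"
      show False
      proof (cases "\<exists>l. p$l < w$l")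
        case True
        then obtain l where l: "p$l < w$l" by auto
        have "f \<eta> $ l \<le> p$l + \<eta>" using e0 unfolding fc s_def by auto
        moreover have "\<eta> < w$l - p$l" using e3 wV l by auto
        moreover have "w$l < f \<eta> $ l" using sw unfolding sdom_def by auto
        ultimately show False by auto
      next
        case False
        then have wD: "w \<in> Dset V p" using wV unfolding Dset_def dom_le_def by (auto simp: not_less)
        have "w$i < f \<eta> $ i" using sw unfolding sdom_def by auto
        then have "i \<notin> Tset p w"
          using sd iv unfolding Tset_def sdom_i_def by auto
        then obtain j where j: "j \<in> Tset p w" "j \<notin> Tset p v" using C wD by blast
        have "f \<eta> $ j \<le> p$j" using e0 j(2) unfolding fc s_def by auto
        moreover have "w$j < f \<eta> $ j" using sw unfolding sdom_def by auto
        ultimately show False using j(1) unfolding Tset_def by auto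
      qed
    qed
    show ?thesis unfolding Uflat_def surface_def using sd dl nd vV by auto
  qed
  have "eventually (\<lambda>\<eta>. f \<eta> \<in> closure (Uflat V i v)) (at_right 0)"
    using eventually_conj[OF ev1 eventually_conj[OF ev2 ev3]]
    by (rule eventually_mono) (use inU closure_subset in blast)
  moreover have "(f \<longlongrightarrow> p) (at_right 0)"
  proof -
    have "((\<lambda>\<eta>::real. p + \<eta> *\<^sub>R s) \<longlongrightarrow> p + 0 *\<^sub>R s) (at_right 0)"
      by (intro tendsto_intros)
    then show ?thesis unfolding f_def by simp
  qed
  ultimately show ?thesis
    by (intro Lim_in_closed_set[of _ f]) auto
qed

lemma nec:
  fixes V :: "(real^'d) set"
  assumes wV: "w \<in> V" and pc: "p \<in> closure (Uflat V i w)"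
  shows "w \<in> Dset V p \<and> i \<in> Tset p w \<and> (\<forall>u\<in>Dset V p. Tset p u \<subseteq> Tset p w \<longrightarrow> i \<in> Tset p u)"
proof -
  have le: "w$j \<le> p$j" for j
  proof -
    have "closure (Uflat V i w) \<subseteq> {q. q$j \<ge> w$j}"
      apply (rule closure_minimal)
       apply (auto simp: Uflat_def sdom_i_def closed_halfspace_component_ge_cart)
      by (metis order_refl less_imp_le)
    then show ?thesis using pc by auto
  qed
  have ge: "p$i \<le> w$i"
  proof -
    have "closure (Uflat V i w) \<subseteq> {q. q$i \<le> w$i}"
      by (rule closure_minimal) (auto simp: Uflat_def sdom_i_def closed_halfspace_component_le_cart)
    then show ?thesis using pc by auto
  qed
  have wD: "w \<in> Dset V p" using wV le unfolding Dset_def dom_le_def by auto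
  have iT: "i \<in> Tset p w" using le[of i] ge unfolding Tset_def by auto
  have "i \<in> Tset p u" if uD: "u \<in> Dset V p" and sub: "Tset p u \<subseteq> Tset p w" for u
  proof (rule ccontr)
    assume iu: "i \<notin> Tset p u"
    define N where "N = (\<Inter>j\<in>{j. j \<notin> Tset p u}. {q::real^'d. q$j > u$j})"
    have oN: "open N" unfolding N_def
      by (intro open_INT) (auto simp: open_halfspace_component_gt_cart)
    have up: "u$j \<le> p$j" for j using uD unfolding Dset_def dom_le_def by auto
    have pN: "p \<in> N" unfolding N_def using up by (auto simp: Tset_def less_le)
    have "N \<inter> closure (Uflat V i w) \<noteq> {}" using pN pc by auto
    then have "N \<inter> Uflat V i w \<noteq> {}" using open_Int_closure_eq_empty[OF oN] by blast
    then obtain q where qN: "q \<in> N" and qU: "q \<in> Uflat V i w" by blast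
    have "sdom q u" unfolding sdom_def
    proof
      fix j
      show "u$j < q$j"
      proof (cases "j \<in> Tset p u")
        case False then show ?thesis using qN unfolding N_def by auto
      next
        case True
        then have "j \<noteq> i" "j \<in> Tset p w" using iu sub by auto
        then have "q$j > w$j" using qU unfolding Uflat_def sdom_i_def by auto
        then show ?thesis using True \<open>j \<in> Tset p w\<close> unfolding Tset_def by auto
      qed
    qed
    moreover have "u \<in> V" using uD unfolding Dset_def by auto
    ultimately show False using qU unfolding Uflat_def surface_def by auto
  qed
  then show ?thesis using wD iT by auto
qed

lemma closure_Union_fin: "finite F \<Longrightarrow> closure (\<Union>F) = \<Union>(closure ` F)"
  by (induction rule: finite_induct) auto

definition Cc :: "(real^'d) set \<Rightarrow> real^'d \<Rightarrow> 'd \<Rightarrow> bool" where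
  "Cc V p i \<longleftrightarrow> (\<exists>v\<in>Dset V p. i \<in> Tset p v \<and> (\<forall>w\<in>Dset V p. Tset p w \<subseteq> Tset p v \<longrightarrow> i \<in> Tset p w))"

lemma char_iff:
  fixes V :: "(real^'d) set"
  assumes fin: "finite V"
  shows "characteristic V p \<longleftrightarrow> p \<in> surface V \<and> (\<forall>i. Cc V p i)"
proof
  assume ch: "characteristic V p"
  have "Cc V p i" for i
  proof -
    obtain v where vV: "v \<in> V" and pf: "p \<in> flat V i v" using ch unfolding characteristic_def by auto
    define W where "W = {w. (sim_i V i)\<^sup>*\<^sup>* v w}"
    have WV: "W \<subseteq> insert v V"
    proof
      fix w assume "w \<in> W"
      then have "(sim_i V i)\<^sup>*\<^sup>* v w" unfolding W_def by auto
      then show "w \<in> insert v V"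
        by (induction rule: rtranclp_induct) (auto simp: sim_i_def)
    qed
    have fW: "finite W" using WV fin finite_subset by blast
    have eq: "\<Union> {Uflat V i w | w. (sim_i V i)\<^sup>*\<^sup>* v w} = \<Union> (Uflat V i ` W)"
      unfolding W_def by auto
    have "p \<in> \<Union> (closure ` (Uflat V i ` W))"
      using pf closure_Union_fin[of "Uflat V i ` W"] fW unfolding flat_def eq by auto
    then obtain w where wW: "w \<in> W" and pw: "p \<in> closure (Uflat V i w)" by auto
    have "w \<in> V" using wW WV vV by auto
    from nec[OF this pw] show ?thesis unfolding Cc_def by blast
  qed
  then show "p \<in> surface V \<and> (\<forall>i. Cc V p i)" using ch unfolding characteristic_def by auto
next
  assume A: "p \<in> surface V \<and> (\<forall>i. Cc V p i)"
  have "\<exists>v\<in>V. p \<in> flat V i v" for i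
  proof -
    obtain v where v: "v \<in> Dset V p" "i \<in> Tset p v" "\<forall>w\<in>Dset V p. Tset p w \<subseteq> Tset p v \<longrightarrow> i \<in> Tset p w"
      using A unfolding Cc_def by blast
    have "p \<in> closure (Uflat V i v)" using suff[OF fin v] .
    moreover have "closure (Uflat V i v) \<subseteq> flat V i v" unfolding flat_def
      by (rule closure_mono) blast
    moreover have "v \<in> V" using v unfolding Dset_def by auto
    ultimately show ?thesis by blast
  qed
  then show "characteristic V p" using A unfolding characteristic_def by auto
qed



definition cv :: "('a \<Rightarrow> 'b set) \<Rightarrow> 'a set \<Rightarrow> bool" where
  "cv T G \<longleftrightarrow> (\<forall>i. \<exists>g\<in>G. i \<in> T g)"

definition mc :: "('a \<Rightarrow> 'b set) \<Rightarrow> 'a set \<Rightarrow> bool" where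
  "mc T G \<longleftrightarrow> cv T G \<and> (\<forall>v\<in>G. \<not> cv T (G - {v}))"

definition trs :: "(nat \<Rightarrow> 'a set) \<Rightarrow> nat \<Rightarrow> 'a set \<Rightarrow> bool" where
  "trs P k G \<longleftrightarrow> (\<forall>i\<le>k. card (G \<inter> P i) = 1)"

definition prt :: "(nat \<Rightarrow> 'a set) \<Rightarrow> nat \<Rightarrow> 'a set \<Rightarrow> bool" where
  "prt P k D \<longleftrightarrow> (\<forall>i\<le>k. P i \<noteq> {}) \<and> (\<forall>i\<le>k. \<forall>j\<le>k. i \<noteq> j \<longrightarrow> P i \<inter> P j = {}) \<and>
     (\<Union>i\<le>k. P i) = D"

lemma part_ne: "prt P k D \<Longrightarrow> i \<le> k \<Longrightarrow> P i \<noteq> {}"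
  unfolding prt_def by blast
lemma part_disj: "prt P k D \<Longrightarrow> i \<le> k \<Longrightarrow> j \<le> k \<Longrightarrow> i \<noteq> j \<Longrightarrow> P i \<inter> P j = {}"
  unfolding prt_def by blast
lemma part_un: "prt P k D \<Longrightarrow> (\<Union>i\<le>k. P i) = D"
  unfolding prt_def by blast
lemma part_sub: "prt P k D \<Longrightarrow> i \<le> k \<Longrightarrow> P i \<subseteq> D"
  using part_un by fastforce
lemma part_mem:
  assumes "prt P k D" "x \<in> D" shows "\<exists>j\<le>k. x \<in> P j"
  using part_un[OF assms(1)] assms(2) by auto

lemma trs_iff: "trs P k G \<longleftrightarrow> (\<forall>i\<le>k. \<exists>x. G \<inter> P i = {x})"
  unfolding trs_def by (simp add: card_1_singleton_iff)

lemma swap: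
  assumes pt: "prt P k D" and tr: "trs P k G" and j: "j \<le> k" and g: "G \<inter> P j = {g}" and w: "w \<in> P j"
  shows "trs P k (insert w (G - {g}))"
  unfolding trs_iff
proof (intro allI impI)
  fix l assume l: "l \<le> k"
  show "\<exists>x. insert w (G - {g}) \<inter> P l = {x}"
  proof (cases "l = j")
    case True then show ?thesis using g w by auto
  next
    case False
    then have d: "P l \<inter> P j = {}" using part_disj[OF pt l j] by auto
    then have "insert w (G - {g}) \<inter> P l = G \<inter> P l" using g w by auto
    then show ?thesis using tr l unfolding trs_iff by auto
  qed
qed

lemma trs_sub:
  assumes "trs P k G" "x \<in> G" "j \<le> k" "x \<in> P j" shows "G \<inter> P j = {x}"
proof -
  obtain y where "G \<inter> P j = {y}" using assms(1,3) unfolding trs_iff by auto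
  then show ?thesis using assms(2,4) by auto
qed

lemma trs_exists:
  assumes pt: "prt P k D"
  shows "\<exists>G\<subseteq>D. trs P k G"
proof -
  define G where "G = (\<lambda>i. SOME x. x \<in> P i) ` {..k}"
  have s: "(SOME x. x \<in> P i) \<in> P i" if "i \<le> k" for i
    using part_ne[OF pt that] by (simp add: some_in_eq)
  have "G \<subseteq> D" unfolding G_def using s part_sub[OF pt] by auto
  moreover have "G \<inter> P i = {SOME x. x \<in> P i}" if i: "i \<le> k" for i
  proof
    show "{SOME x. x \<in> P i} \<subseteq> G \<inter> P i" using s i unfolding G_def by auto
    show "G \<inter> P i \<subseteq> {SOME x. x \<in> P i}"
    proof
      fix y assume "y \<in> G \<inter> P i"
      then obtain l where l: "l \<le> k" "y = (SOME x. x \<in> P l)" "y \<in> P i" unfolding G_def by auto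
      have "l = i"
      proof (rule ccontr)
        assume "l \<noteq> i"
        then have "P l \<inter> P i = {}" using part_disj[OF pt l(1) i] by auto
        then show False using s[OF l(1)] l by auto
      qed
      then show "y \<in> {SOME x. x \<in> P i}" using l by auto
    qed
  qed
  moreover have "trs P k G" unfolding trs_iff using calculation(2) by auto
  ultimately show ?thesis by auto
qed

lemma trs_containing:
  assumes pt: "prt P k D" and u: "u \<in> D"
  shows "\<exists>G\<subseteq>D. trs P k G \<and> u \<in> G"
proof -
  obtain G0 where G0: "G0 \<subseteq> D" "trs P k G0" using trs_exists[OF pt] by blast
  obtain i where i: "i \<le> k" "u \<in> P i" using part_mem[OF pt u] by blast
  obtain g where g: "G0 \<inter> P i = {g}" using G0 i unfolding trs_iff by blast
  have "trs P k (insert u (G0 - {g}))" by (rule swap[OF pt G0(2) i(1) g i(2)])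
  moreover have "insert u (G0 - {g}) \<subseteq> D" using G0(1) u by auto
  ultimately show ?thesis by (intro exI[of _ "insert u (G0 - {g})"]) auto
qed



lemma trs_card:
  assumes pt: "prt P k D" and fin: "finite D" and G: "G \<subseteq> D" and tr: "trs P k G"
  shows "card G = Suc k"
proof -
  have "G = (\<Union>i\<le>k. G \<inter> P i)" using G part_un[OF pt] by auto
  moreover have "card (\<Union>i\<le>k. G \<inter> P i) = (\<Sum>i\<le>k. card (G \<inter> P i))"
    apply (rule card_UN_disjoint)
    using fin G finite_subset apply auto[2]
    using part_disj[OF pt] by auto
  ultimately have "card G = (\<Sum>i\<le>k. card (G \<inter> P i))" by simp
  also have "\<dots> = (\<Sum>i\<le>k. 1)" using tr unfolding trs_def by simp
  finally show ?thesis by simp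
qed



lemma partR:
  fixes T :: "'a \<Rightarrow> 'b set"
  assumes fin: "finite D" and pt: "prt P k D" and TR: "\<forall>G\<subseteq>D. mc T G \<longleftrightarrow> trs P k G"
  shows "\<exists>v\<in>D. i \<in> T v \<and> (\<forall>w\<in>D. T w \<subseteq> T v \<longrightarrow> i \<in> T w)"
proof (rule ccontr)
  assume N: "\<not> ?thesis"
  have "\<forall>G. G \<subseteq> D \<and> trs P k G \<and> card {g\<in>G. i \<in> T g} = n \<longrightarrow> False" for n
  proof (induction n rule: less_induct)
    case (less n)
    show ?case
    proof (intro allI impI)
      fix G assume A: "G \<subseteq> D \<and> trs P k G \<and> card {g\<in>G. i \<in> T g} = n"
      then have mG: "mc T G" using TR by auto
      then obtain g where g: "g \<in> G" "i \<in> T g" unfolding mc_def cv_def by blast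
      have gD: "g \<in> D" using A g by auto
      then obtain w where w: "w \<in> D" "T w \<subseteq> T g" "i \<notin> T w" using N g by blast
      obtain j where j: "j \<le> k" "w \<in> P j" using part_mem[OF pt w(1)] by blast
      obtain g' where g': "G \<inter> P j = {g'}" using A j unfolding trs_iff by blast
      define G' where "G' = insert w (G - {g'})"
      have trG': "trs P k G'" unfolding G'_def by (rule swap[OF pt _ j(1) g' j(2)]) (use A in auto)
      have G'D: "G' \<subseteq> D" unfolding G'_def using A w by auto
      have mG': "mc T G'" using TR trG' G'D by auto
      show False
      proof (cases "g' = g")
        case False
        have "cv T (G' - {w})" unfolding cv_def
        proof
          fix c
          obtain x where x: "x \<in> G'" "c \<in> T x" using mG' unfolding mc_def cv_def by blast
          show "\<exists>y\<in>G' - {w}. c \<in> T y"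
          proof (cases "x = w")
            case True
            have "g \<in> G' - {w}" unfolding G'_def using g False w by auto
            then show ?thesis using x True w(2) by auto
          qed (use x in auto)
        qed
        moreover have "w \<in> G'" unfolding G'_def by auto
        ultimately show False using mG' unfolding mc_def by blast
      next
        case True
        have fG: "finite G" using A fin finite_subset by blast
        have sub: "{x\<in>G'. i \<in> T x} \<subseteq> {x\<in>G. i \<in> T x} - {g}" unfolding G'_def using True w(3) by auto
        have "card {x\<in>G'. i \<in> T x} < n"
        proof -
          have "card {x\<in>G'. i \<in> T x} \<le> card ({x\<in>G. i \<in> T x} - {g})"
            by (rule card_mono) (use fG sub in auto)
          also have "\<dots> < card {x\<in>G. i \<in> T x}"
            by (rule card_Diff1_less) (use fG g in auto)
          finally show ?thesis using A by simp
        qed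
        then show False using less G'D trG' by blast
      qed
    qed
  qed
  moreover obtain G where "G \<subseteq> D" "trs P k G" using trs_exists[OF pt] by blast
  ultimately show False by (metis (no_types, lifting))
qed



lemma partS:
  fixes T :: "'a \<Rightarrow> 'b set"
  assumes pt: "prt P k D" and TR: "\<forall>G\<subseteq>D. mc T G \<longleftrightarrow> trs P k G"
    and CL: "\<forall>G\<subseteq>D. mc T G \<longleftrightarrow> (\<forall>a\<in>D. card (G \<inter> {w\<in>D. T w = T a}) = 1)"
    and u: "u \<in> D" and w: "w \<in> D"
  shows "(\<exists>i\<le>k. u \<in> P i \<and> w \<in> P i) \<longleftrightarrow> T u = T w"
proof
  assume "\<exists>i\<le>k. u \<in> P i \<and> w \<in> P i"
  then obtain i where i: "i \<le> k" "u \<in> P i" "w \<in> P i" by blast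
  show "T u = T w"
  proof (cases "u = w")
    case False
    obtain G where G: "G \<subseteq> D" "trs P k G" "u \<in> G" using trs_containing[OF pt u] by blast
    have Gi: "G \<inter> P i = {u}" using trs_sub[OF G(2) G(3) i(1) i(2)] .
    define G' where "G' = insert w (G - {u})"
    have trG': "trs P k G'" unfolding G'_def by (rule swap[OF pt G(2) i(1) Gi i(3)])
    have G'D: "G' \<subseteq> D" unfolding G'_def using G w by auto
    have c1: "card (G \<inter> {x\<in>D. T x = T w}) = 1" using CL TR G w by auto
    have c2: "card (G' \<inter> {x\<in>D. T x = T w}) = 1" using CL TR trG' G'D w by auto
    obtain x where x: "G \<inter> {y\<in>D. T y = T w} = {x}" using c1 by (auto simp: card_1_singleton_iff)
    show ?thesis
    proof (rule ccontr)
      assume ne: "T u \<noteq> T w"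
      then have "x \<noteq> u" using x by auto
      then have "x \<in> G'" using x unfolding G'_def by auto
      moreover have "w \<notin> G" using Gi False i(3) by auto
      then have "x \<noteq> w" using x by auto
      moreover have "w \<in> G'" unfolding G'_def by auto
      ultimately have "{x, w} \<subseteq> G' \<inter> {y\<in>D. T y = T w}" using x w by auto
      moreover have "finite (G' \<inter> {y\<in>D. T y = T w})" using c2 by (intro card_ge_0_finite) simp
      ultimately have "card {x, w} \<le> 1" using c2 card_mono by metis
      then show False using \<open>x \<noteq> w\<close> by simp
    qed
  qed simp
next
  assume eq: "T u = T w"
  obtain i where i: "i \<le> k" "u \<in> P i" using part_mem[OF pt u] by blast
  obtain j where j: "j \<le> k" "w \<in> P j" using part_mem[OF pt w] by blast
  show "\<exists>i\<le>k. u \<in> P i \<and> w \<in> P i"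
  proof (cases "i = j")
    case True then show ?thesis using i j by auto
  next
    case False
    have dj: "P i \<inter> P j = {}" using part_disj[OF pt i(1) j(1) False] by auto
    obtain G where G: "G \<subseteq> D" "trs P k G" "u \<in> G" using trs_containing[OF pt u] by blast
    obtain g where g: "G \<inter> P j = {g}" using G j unfolding trs_iff by blast
    define G' where "G' = insert w (G - {g})"
    have trG': "trs P k G'" unfolding G'_def by (rule swap[OF pt G(2) j(1) g j(2)])
    have G'D: "G' \<subseteq> D" unfolding G'_def using G w by auto
    have mG': "mc T G'" using TR trG' G'D by auto
    have ug: "u \<noteq> g" using g i(2) dj by auto
    have uw: "u \<noteq> w" using i(2) j(2) dj by auto
    have uG': "u \<in> G' - {w}" unfolding G'_def using G(3) ug uw by auto
    have "cv T (G' - {w})" unfolding cv_def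
    proof
      fix c
      obtain x where x: "x \<in> G'" "c \<in> T x" using mG' unfolding mc_def cv_def by blast
      show "\<exists>y\<in>G' - {w}. c \<in> T y"
      proof (cases "x = w")
        case True then show ?thesis using uG' x eq by auto
      qed (use x in auto)
    qed
    moreover have "w \<in> G'" unfolding G'_def by auto
    ultimately show ?thesis using mG' unfolding mc_def by blast
  qed
qed



lemma chain_max:
  assumes "finite S" "S \<noteq> {}" "\<And>X Y. X\<in>S \<Longrightarrow> Y\<in>S \<Longrightarrow> X \<subseteq> Y \<or> Y \<subseteq> X"
  shows "\<exists>M\<in>S. \<forall>X\<in>S. X \<subseteq> M"
  using assms
proof (induction S rule: finite_ne_induct)
  case (singleton x) then show ?case by auto
next
  case (insert x F)
  have "\<exists>M\<in>F. \<forall>X\<in>F. X \<subseteq> M" using insert.IH insert.prems by simp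
  then obtain M where M: "M \<in> F" "\<forall>X\<in>F. X \<subseteq> M" by (elim bexE)
  have "x \<subseteq> M \<or> M \<subseteq> x" using insert.prems[of x M] M(1) by simp
  then show ?case
  proof
    assume "x \<subseteq> M" then show ?thesis using M by (intro bexI[of _ M]) auto
  next
    assume "M \<subseteq> x" then show ?thesis using M by (intro bexI[of _ x]) auto
  qed
qed

lemma priv:
  fixes T :: "'a \<Rightarrow> 'b set"
  assumes fin: "finite D" and ne: "\<And>w. w\<in>D \<Longrightarrow> T w \<noteq> {}"
    and C: "\<And>i. \<exists>v\<in>D. i \<in> T v \<and> (\<forall>w\<in>D. T w \<subseteq> T v \<longrightarrow> i \<in> T w)"
    and ch: "\<And>x u v. x\<in>D \<Longrightarrow> u\<in>D \<Longrightarrow> v\<in>D \<Longrightarrow> T x \<inter> T v \<subseteq> T u \<or> T x \<inter> T u \<subseteq> T v"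
    and a: "a \<in> D"
  shows "\<exists>i\<in>T a. \<forall>w\<in>D. i \<in> T w \<longrightarrow> T w = T a"
proof (rule ccontr)
  assume N0: "\<not> ?thesis"
  have N: "\<exists>w\<in>D. i \<in> T w \<and> T w \<noteq> T a" if "i \<in> T a" for i
    using N0 that by auto
  have nostrict: False if b: "b \<in> D" and sb: "T a \<subset> T b" for b
  proof -
    obtain i where i: "i \<in> T b" "i \<notin> T a" using sb by auto
    obtain v where v: "v \<in> D" "i \<in> T v" "\<forall>w\<in>D. T w \<subseteq> T v \<longrightarrow> i \<in> T w" using C[of i] by (elim bexE conjE)
    have "\<not> T a \<subseteq> T v" using v(3) a i(2) by auto
    moreover have "T b \<inter> T v \<subseteq> T a \<or> T b \<inter> T a \<subseteq> T v" using ch[OF b a v(1)] .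
    ultimately show False using i v(2) sb by auto
  qed
  define W where "W = {w\<in>D. T w \<noteq> T a}"
  define S where "S = (\<lambda>w. T w \<inter> T a) ` W"
  obtain i0 where "i0 \<in> T a" using ne[OF a] by auto
  then obtain w0 where "w0 \<in> D" "i0 \<in> T w0 \<and> T w0 \<noteq> T a" using N[of i0] by auto
  then have "w0 \<in> W" unfolding W_def by auto
  then have Sne: "S \<noteq> {}" unfolding S_def by auto
  have Sfin: "finite S" unfolding S_def W_def using fin by auto
  have Sch: "X \<subseteq> Y \<or> Y \<subseteq> X" if XY: "X \<in> S" "Y \<in> S" for X Y
  proof -
    obtain x where x: "x \<in> W" "X = T x \<inter> T a" using XY(1) unfolding S_def by auto
    obtain y where y: "y \<in> W" "Y = T y \<inter> T a" using XY(2) unfolding S_def by auto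
    have "x \<in> D" "y \<in> D" using x y unfolding W_def by auto
    then have "T a \<inter> T y \<subseteq> T x \<or> T a \<inter> T x \<subseteq> T y" using ch a by blast
    then show "X \<subseteq> Y \<or> Y \<subseteq> X" using x y by auto
  qed
  have "\<exists>M\<in>S. \<forall>X\<in>S. X \<subseteq> M" by (rule chain_max[OF Sfin Sne]) (rule Sch)
  then obtain M where M: "M \<in> S" "\<forall>X\<in>S. X \<subseteq> M" by (elim bexE)
  obtain m where m: "m \<in> W" "M = T m \<inter> T a" using M(1) unfolding S_def by auto
  have "T a \<subseteq> M"
  proof
    fix i assume iA: "i \<in> T a"
    then obtain w where w: "w \<in> D" "i \<in> T w \<and> T w \<noteq> T a" using N[of i] by auto
    then have "w \<in> W" unfolding W_def by auto
    then have "T w \<inter> T a \<in> S" unfolding S_def by auto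
    then have "T w \<inter> T a \<subseteq> M" using M(2) by auto
    then show "i \<in> M" using iA w by auto
  qed
  then have "T a \<subseteq> T m" using m by auto
  moreover have "T m \<noteq> T a" "m \<in> D" using m unfolding W_def by auto
  ultimately show False using nostrict[of m] by auto
qed



lemma classQ:
  fixes T :: "'a \<Rightarrow> 'b set"
  assumes fin: "finite D" and cD: "cv T D"
    and pv: "\<forall>a\<in>D. \<exists>i\<in>T a. \<forall>w\<in>D. i \<in> T w \<longrightarrow> T w = T a"
    and G: "G \<subseteq> D"
  shows "mc T G \<longleftrightarrow> (\<forall>a\<in>D. card (G \<inter> {w\<in>D. T w = T a}) = 1)"
proof -
  have cvG: "cv T H \<longleftrightarrow> (\<forall>a\<in>D. \<exists>g\<in>H. T g = T a)" if H: "H \<subseteq> D" for H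
  proof
    assume c: "cv T H"
    show "\<forall>a\<in>D. \<exists>g\<in>H. T g = T a"
    proof
      fix a assume "a \<in> D"
      then obtain i where i: "i \<in> T a" "\<forall>w\<in>D. i \<in> T w \<longrightarrow> T w = T a" using pv by blast
      then obtain g where "g \<in> H" "i \<in> T g" using c unfolding cv_def by blast
      then show "\<exists>g\<in>H. T g = T a" using i H by blast
    qed
  next
    assume c: "\<forall>a\<in>D. \<exists>g\<in>H. T g = T a"
    show "cv T H" unfolding cv_def
    proof
      fix i
      obtain a where "a \<in> D" "i \<in> T a" using cD unfolding cv_def by blast
      then show "\<exists>g\<in>H. i \<in> T g" using c by metis
    qed
  qed
  have fG: "finite G" using G fin finite_subset by blast
  show ?thesis
  proof
    assume m: "mc T G"
    show "\<forall>a\<in>D. card (G \<inter> {w\<in>D. T w = T a}) = 1"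
    proof
      fix a assume a: "a \<in> D"
      obtain g where g: "g \<in> G" "T g = T a" using m cvG[OF G] a unfolding mc_def by blast
      have "G \<inter> {w\<in>D. T w = T a} = {g}"
      proof (rule ccontr)
        assume "G \<inter> {w\<in>D. T w = T a} \<noteq> {g}"
        then obtain y where y: "y \<in> G" "T y = T a" "y \<noteq> g" using g G by auto
        have GyD: "G - {y} \<subseteq> D" using G by auto
        have "cv T (G - {y})" unfolding cvG[OF GyD]
        proof
          fix b assume "b \<in> D"
          then obtain h where h: "h \<in> G" "T h = T b" using m cvG[OF G] unfolding mc_def by blast
          show "\<exists>x\<in>G - {y}. T x = T b"
          proof (cases "h = y")
            case True then show ?thesis using g y h by auto
          qed (use h in auto)
        qed
        then show False using m y(1) unfolding mc_def by blast
      qed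
      then show "card (G \<inter> {w\<in>D. T w = T a}) = 1" by simp
    qed
  next
    assume c: "\<forall>a\<in>D. card (G \<inter> {w\<in>D. T w = T a}) = 1"
    have "cv T G" unfolding cvG[OF G]
    proof
      fix a assume "a \<in> D"
      then have "G \<inter> {w\<in>D. T w = T a} \<noteq> {}" using c by fastforce
      then show "\<exists>g\<in>G. T g = T a" by auto
    qed
    moreover have "\<not> cv T (G - {v})" if v: "v \<in> G" for v
    proof
      assume cv: "cv T (G - {v})"
      have vD: "v \<in> D" using v G by auto
      then obtain g where g: "g \<in> G - {v}" "T g = T v" using cvG[of "G - {v}"] G cv by blast
      have "card (G \<inter> {w\<in>D. T w = T v}) = 1" using c vD by auto
      moreover have "{g, v} \<subseteq> G \<inter> {w\<in>D. T w = T v}" using g v G by auto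
      moreover have "finite (G \<inter> {w\<in>D. T w = T v})" using fG by auto
      ultimately have "card {g, v} \<le> 1" using card_mono by metis
      then show False using g by simp
    qed
    ultimately show "mc T G" unfolding mc_def by blast
  qed
qed



lemma cov_cv: "cov p G \<longleftrightarrow> cv (Tset p) G"
  unfolding cov_def cv_def Tset_def by (auto simp: eq_commute)

lemma basics:
  fixes V :: "(real^'d) set"
  assumes ac: "antichain V" and gp: "generated_point V p"
  shows "finite V" "p \<in> surface V" "finite (Dset V p)"
    "\<And>w. w \<in> Dset V p \<Longrightarrow> Tset p w \<noteq> {}"
    "cv (Tset p) (Dset V p)"
    "\<And>G. min_gen_set V p G \<longleftrightarrow> G \<subseteq> Dset V p \<and> mc (Tset p) G"
proof -
  show fV: "finite V" using ac unfolding antichain_def by auto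
  show sp: "p \<in> surface V" using gp unfolding generated_point_def by auto
  show "finite (Dset V p)" using fV unfolding Dset_def by auto
  show "Tset p w \<noteq> {}" if w: "w \<in> Dset V p" for w
  proof
    assume e: "Tset p w = {}"
    have "sdom p w" unfolding sdom_def
    proof
      fix j
      have "w$j \<le> p$j" using w unfolding Dset_def dom_le_def by auto
      moreover have "p$j \<noteq> w$j" using e unfolding Tset_def by auto
      ultimately show "w$j < p$j" by auto
    qed
    moreover have "w \<in> V" using w unfolding Dset_def by auto
    ultimately show False using sp unfolding surface_def by auto
  qed
  obtain G0 where G0: "gen_set V p G0" using gp unfolding generated_point_def by auto
  then have "G0 \<subseteq> Dset V p \<and> cov p G0" using join_iff[OF fV, of G0 p] unfolding gen_set_def by auto
  then show "cv (Tset p) (Dset V p)" unfolding cov_cv cv_def by blast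
  show "min_gen_set V p G \<longleftrightarrow> G \<subseteq> Dset V p \<and> mc (Tset p) G" for G
    unfolding min_gen_iff[OF fV] mg_def mc_def cov_cv by auto
qed

lemma chainND:
  fixes V :: "(real^'d) set"
  assumes nd: "\<not> degenerate V" and ch: "characteristic V p"
    and x: "x \<in> Dset V p" and u: "u \<in> Dset V p" and v: "v \<in> Dset V p"
  shows "Tset p x \<inter> Tset p v \<subseteq> Tset p u \<or> Tset p x \<inter> Tset p u \<subseteq> Tset p v"
proof (rule ccontr)
  assume "\<not> ?thesis"
  then obtain i j where i: "i \<in> Tset p x" "i \<in> Tset p v" "i \<notin> Tset p u"
    and j: "j \<in> Tset p x" "j \<in> Tset p u" "j \<notin> Tset p v" by auto
  have ij: "i \<noteq> j" using i j by auto
  have ui: "u$i \<le> p$i" using u unfolding Dset_def dom_le_def by auto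
  have vj: "v$j \<le> p$j" using v unfolding Dset_def dom_le_def by auto
  have "u$i < v$i \<and> v$i = x$i \<and> x$i = p$i \<and> v$j < u$j \<and> u$j = x$j \<and> x$j = p$j"
    using i j ui vj unfolding Tset_def by auto
  then have "degenerate V" unfolding degenerate_def using ch x u v ij by blast
  then show False using nd by auto
qed

lemma rank_lemma:
  fixes V :: "(real^'d) set"
  assumes ac: "antichain V" and gp: "generated_point V p"
    and pt: "prt P k (Dset V p)" and TR: "\<forall>G\<subseteq>Dset V p. mc (Tset p) G \<longleftrightarrow> trs P k G"
  shows "rank V p = k"
proof -
  note B = basics[OF ac gp]
  obtain G where G: "G \<subseteq> Dset V p" "trs P k G" using trs_exists[OF pt] by blast
  then have "min_gen_set V p G" using B(6) TR by auto
  then have S: "min_gen_set V p (SOME G. min_gen_set V p G)" by (rule someI)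
  define S where "S = (SOME G. min_gen_set V p G)"
  have mS: "min_gen_set V p S" using S unfolding S_def .
  have "S \<subseteq> Dset V p \<and> mc (Tset p) S" using B(6)[of S] mS by (simp only:)
  then have "S \<subseteq> Dset V p" "mc (Tset p) S" by auto
  then have "trs P k S" "S \<subseteq> Dset V p" using TR by auto
  then have "card S = Suc k" using trs_card[OF pt B(3)] by auto
  then show ?thesis unfolding rank_def S_def[symmetric] by simp
qed

lemma main_part:
  fixes V :: "(real^'d) set"
  assumes ac: "antichain V" and nd: "\<not> degenerate V" and gp: "generated_point V p"
    and pt: "prt P k (Dset V p)" and TR: "\<forall>G\<subseteq>Dset V p. mc (Tset p) G \<longleftrightarrow> trs P k G"
  shows "characteristic V p \<and> rank V p = k \<and>
    (\<forall>u\<in>Dset V p. \<forall>w\<in>Dset V p. (\<exists>i\<le>k. u \<in> P i \<and> w \<in> P i) \<longleftrightarrow> Tset p u = Tset p w)"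
proof -
  note B = basics[OF ac gp]
  have "Cc V p i" for i
    using partR[OF B(3) pt TR, of i] unfolding Cc_def by auto
  then have ch: "characteristic V p" using char_iff[OF B(1)] B(2) by auto
  have C: "\<exists>v\<in>Dset V p. i \<in> Tset p v \<and> (\<forall>w\<in>Dset V p. Tset p w \<subseteq> Tset p v \<longrightarrow> i \<in> Tset p w)" for i
    using \<open>\<And>i. Cc V p i\<close>[of i] unfolding Cc_def by auto
  have pv: "\<forall>a\<in>Dset V p. \<exists>i\<in>Tset p a. \<forall>w\<in>Dset V p. i \<in> Tset p w \<longrightarrow> Tset p w = Tset p a"
    using priv[OF B(3) B(4) C chainND[OF nd ch]] by blast
  have CL: "\<forall>G\<subseteq>Dset V p. mc (Tset p) G \<longleftrightarrow> (\<forall>a\<in>Dset V p. card (G \<inter> {w\<in>Dset V p. Tset p w = Tset p a}) = 1)"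
    using classQ[OF B(3) B(5) pv] by blast
  show ?thesis using ch rank_lemma[OF ac gp pt TR] partS[OF pt TR CL] by blast
qed

theorem corollary4p8:
  fixes V :: "(real^'d) set" and p :: "real^'d" and k :: nat
  assumes "antichain V" and "\<not> degenerate V" and "generated_point V p"
  shows "((characteristic V p \<and> rank V p = k) \<longleftrightarrow>
           (\<exists>P :: nat \<Rightarrow> (real^'d) set.
              (\<forall>i\<le>k. P i \<noteq> {}) \<and>
              (\<forall>i\<le>k. \<forall>j\<le>k. i \<noteq> j \<longrightarrow> P i \<inter> P j = {}) \<and>
              (\<Union>i\<le>k. P i) = Dset V p \<and>
              (\<forall>G. G \<subseteq> Dset V p \<longrightarrow>
                   (min_gen_set V p G \<longleftrightarrow> (\<forall>i\<le>k. card (G \<inter> P i) = 1))))) \<and>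
         (\<forall>P :: nat \<Rightarrow> (real^'d) set.
              ((\<forall>i\<le>k. P i \<noteq> {}) \<and>
               (\<forall>i\<le>k. \<forall>j\<le>k. i \<noteq> j \<longrightarrow> P i \<inter> P j = {}) \<and>
               (\<Union>i\<le>k. P i) = Dset V p \<and>
               (\<forall>G. G \<subseteq> Dset V p \<longrightarrow>
                   (min_gen_set V p G \<longleftrightarrow> (\<forall>i\<le>k. card (G \<inter> P i) = 1))))
           \<longrightarrow> (\<forall>u\<in>Dset V p. \<forall>w\<in>Dset V p.
                  (\<exists>i\<le>k. u \<in> P i \<and> w \<in> P i) \<longleftrightarrow> Tset p u = Tset p w))"
proof -
  note ac = assms(1) and nd = assms(2) and gp = assms(3)
  note B = basics[OF ac gp]
  define D where "D = Dset V p"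
  define T where "T = Tset p"
  have conv: "((\<forall>i\<le>k. P i \<noteq> {}) \<and>
              (\<forall>i\<le>k. \<forall>j\<le>k. i \<noteq> j \<longrightarrow> P i \<inter> P j = {}) \<and>
              (\<Union>i\<le>k. P i) = Dset V p \<and>
              (\<forall>G. G \<subseteq> Dset V p \<longrightarrow>
                   (min_gen_set V p G \<longleftrightarrow> (\<forall>i\<le>k. card (G \<inter> P i) = 1))))
     \<longleftrightarrow> prt P k (Dset V p) \<and> (\<forall>G\<subseteq>Dset V p. mc (Tset p) G \<longleftrightarrow> trs P k G)" for P
    unfolding prt_def trs_def B(6) by auto
  have fwd: "\<exists>P. prt P k (Dset V p) \<and> (\<forall>G\<subseteq>Dset V p. mc (Tset p) G \<longleftrightarrow> trs P k G)"
    if ch: "characteristic V p" and rk: "rank V p = k"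
  proof -
    have C: "\<exists>v\<in>Dset V p. i \<in> Tset p v \<and> (\<forall>w\<in>Dset V p. Tset p w \<subseteq> Tset p v \<longrightarrow> i \<in> Tset p w)" for i
      using char_iff[OF B(1)] ch unfolding Cc_def by auto
    have pv: "\<forall>a\<in>Dset V p. \<exists>i\<in>Tset p a. \<forall>w\<in>Dset V p. i \<in> Tset p w \<longrightarrow> Tset p w = Tset p a"
      using priv[OF B(3) B(4) C chainND[OF nd ch]] by blast
    have CL: "\<forall>G\<subseteq>Dset V p. mc (Tset p) G \<longleftrightarrow> (\<forall>a\<in>Dset V p. card (G \<inter> {w\<in>Dset V p. Tset p w = Tset p a}) = 1)"
      using classQ[OF B(3) B(5) pv] by blast
    define cls where "cls a = {w\<in>Dset V p. Tset p w = Tset p a}" for a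
    define CS where "CS = cls ` Dset V p"
    have fCS: "finite CS" unfolding CS_def using B(3) by auto
    obtain h where h: "bij_betw h {0..<card CS} CS" using ex_bij_betw_nat_finite[OF fCS] by blast
    have Dne: "Dset V p \<noteq> {}" using B(5) unfolding cv_def by auto
    then have "CS \<noteq> {}" unfolding CS_def by auto
    then have m1: "card CS \<ge> 1" using fCS by (simp add: Suc_le_eq card_gt_0_iff)
    define K where "K = card CS - 1"
    have atm: "{..K} = {0..<card CS}" unfolding K_def using m1 by auto
    have himg: "h ` {..K} = CS" using h atm unfolding bij_betw_def by auto
    have hinj: "inj_on h {..K}" using h atm unfolding bij_betw_def by auto
    have ptK: "prt h K (Dset V p)" unfolding prt_def
    proof (intro conjI allI impI)
      fix i assume "i \<le> K"
      then have "h i \<in> CS" using himg by auto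
      then obtain a where "a \<in> Dset V p" "h i = cls a" unfolding CS_def by auto
      then show "h i \<noteq> {}" unfolding cls_def by auto
    next
      fix i j assume ij: "i \<le> K" "j \<le> K" "i \<noteq> j"
      then have ne: "h i \<noteq> h j" using hinj unfolding inj_on_def by auto
      obtain a where a: "a \<in> Dset V p" "h i = cls a" using ij(1) himg unfolding CS_def by (metis atMost_iff imageE image_eqI)
      obtain b where b: "b \<in> Dset V p" "h j = cls b" using ij(2) himg unfolding CS_def by (metis atMost_iff imageE image_eqI)
      show "h i \<inter> h j = {}"
      proof (rule ccontr)
        assume "h i \<inter> h j \<noteq> {}"
        then obtain x where "x \<in> cls a" "x \<in> cls b" using a b by auto
        then have "Tset p a = Tset p b" unfolding cls_def by auto
        then have "cls a = cls b" unfolding cls_def by auto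
        then show False using ne a b by auto
      qed
    next
      have "(\<Union>i\<le>K. h i) = \<Union> CS" using himg by auto
      also have "\<dots> = Dset V p" unfolding CS_def cls_def by auto
      finally show "(\<Union>i\<le>K. h i) = Dset V p" .
    qed
    have trK: "trs h K G \<longleftrightarrow> (\<forall>a\<in>Dset V p. card (G \<inter> cls a) = 1)" for G
    proof -
      have "trs h K G \<longleftrightarrow> (\<forall>c\<in>h ` {..K}. card (G \<inter> c) = 1)" unfolding trs_def by auto
      also have "\<dots> \<longleftrightarrow> (\<forall>c\<in>CS. card (G \<inter> c) = 1)" using himg by simp
      also have "\<dots> \<longleftrightarrow> (\<forall>a\<in>Dset V p. card (G \<inter> cls a) = 1)" unfolding CS_def by auto
      finally show ?thesis .
    qed
    have TRK: "\<forall>G\<subseteq>Dset V p. mc (Tset p) G \<longleftrightarrow> trs h K G"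
      using CL trK unfolding cls_def by auto
    have "rank V p = K" by (rule rank_lemma[OF ac gp ptK TRK])
    then have "K = k" using rk by simp
    then show ?thesis using ptK TRK by blast
  qed
  have part1: "(characteristic V p \<and> rank V p = k) \<longleftrightarrow>
     (\<exists>P. prt P k (Dset V p) \<and> (\<forall>G\<subseteq>Dset V p. mc (Tset p) G \<longleftrightarrow> trs P k G))"
    using fwd main_part[OF ac nd gp] by blast
  have part2: "\<forall>P. prt P k (Dset V p) \<and> (\<forall>G\<subseteq>Dset V p. mc (Tset p) G \<longleftrightarrow> trs P k G) \<longrightarrow>
     (\<forall>u\<in>Dset V p. \<forall>w\<in>Dset V p. (\<exists>i\<le>k. u \<in> P i \<and> w \<in> P i) \<longleftrightarrow> Tset p u = Tset p w)"
    using main_part[OF ac nd gp] by blast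
  show ?thesis unfolding conv using part1 part2 by blast
qed

end
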